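(* Let $\varepsilon>0$ and $A\in GL_n(\mathbf{R})$. Then there exist $\delta>0$ and $R_0>0$ such that for every $w\in\mathbf{R}^n$ with $\|w\|_\infty<\delta$ and $w_i=0$ for every $i\in I_\mathbf{Q}(A)$, and for every $R\ge R_0$, $D_R^+\big(\pi(A\mathbf{Z}^n)\,\Delta\,\pi(A\mathbf{Z}^n+w)\big)\le\varepsilon.$
   Context: Balls are for the sup norm: $B(x,R)=\{y:\max_i|x_i-y_i|<R\}$. For a discrete set $\Gamma\subset\mathbf{R}^n$ and $R\ge1$, $D_R^+(\Gamma)=\sup_{x\in\mathbf{R}^n}\frac{\operatorname{Card}(B(x,R)\cap\Gamma)}{\operatorname{Card}(B(x,R)\cap\mathbf{Z}^n)}$. Let $p:\mathbf{R}\to\mathbf{Z}$ send $x$ to the unique integer $k$ with $k-1/2<x\le k+1/2$ and $\pi:\mathbf{R}^n\to\mathbf{Z}^n$, $\pi((x_i)_i)=(p(x_i))_i$; for a set $X$, $\pi(X)=\{\pi(x):x\in X\}$. For $A=(a_{i,j})\in GL_n(\mathbf{R})$, $I_\mathbf{Q}(A)$ is the set of row indices $i$ such that $a_{i,j}\in\mathbf{Q}$ for every $j\in\{1,\dots,n\}$. *)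

theory Defs
  imports "HOL-Analysis.Analysis"
begin

definition intvecs :: "(real ^ 'n) set" where
  "intvecs = {x. \<forall>i. x $ i \<in> \<int>}"

definition supball :: "real ^ 'n \<Rightarrow> real \<Rightarrow> (real ^ 'n) set" where
  "supball x R = {y. \<forall>i. \<bar>x $ i - y $ i\<bar> < R}"

definition upper_dens :: "real \<Rightarrow> (real ^ 'n) set \<Rightarrow> real" where
  "upper_dens R \<Gamma> = (SUP x. real (card (supball x R \<inter> \<Gamma>)) / real (card (supball x R \<inter> intvecs)))"

definition rnd :: "real \<Rightarrow> int" where
  "rnd x = (THE k::int. real_of_int k - 1/2 < x \<and> x \<le> real_of_int k + 1/2)"

definition rndvec :: "real ^ 'n \<Rightarrow> real ^ 'n" where
  "rndvec x = (\<chi> i. real_of_int (rnd (x $ i)))"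

definition rat_rows :: "real ^ 'n ^ 'n \<Rightarrow> 'n set" where
  "rat_rows A = {i. \<forall>j. A $ i $ j \<in> \<rat>}"

definition lattice :: "real ^ 'n ^ 'n \<Rightarrow> (real ^ 'n) set" where
  "lattice A = (\<lambda>k. A *v k) ` intvecs"

end

theory Submission
  imports Defs "HOL-Analysis.Kronecker_Approximation_Theorem"
begin

lemma rnd_eq: "rnd u = \<lceil>u - 1/2\<rceil>"
  unfolding rnd_def
proof (rule the_equality)
  show "real_of_int \<lceil>u - 1/2\<rceil> - 1/2 < u \<and> u \<le> real_of_int \<lceil>u - 1/2\<rceil> + 1/2"
    using ceiling_correct[of "u - 1/2"] by linarith
  fix k :: int assume "real_of_int k - 1/2 < u \<and> u \<le> real_of_int k + 1/2"
  then show "k = \<lceil>u - 1/2\<rceil>" by (intro ceiling_unique[symmetric]) auto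
qed

lemma rnd_unique: "real_of_int k - 1/2 < u \<Longrightarrow> u \<le> real_of_int k + 1/2 \<Longrightarrow> rnd u = k"
  unfolding rnd_eq by (intro ceiling_unique) auto

lemma rnd_close: "\<bar>real_of_int (rnd u) - u\<bar> \<le> 1/2"
proof -
  have "real_of_int \<lceil>u - 1/2\<rceil> - 1 < u - 1/2" "u - 1/2 \<le> real_of_int \<lceil>u - 1/2\<rceil>"
    using ceiling_correct by auto
  then show ?thesis unfolding rnd_eq by linarith
qed

lemma rnd_boundary:
  assumes "rnd u \<noteq> rnd (u + w)"
  shows "\<exists>z::int. \<bar>u - z - 1/2\<bar> \<le> \<bar>w\<bar>"
proof -
  let ?k = "rnd u"
  have k: "real_of_int ?k - 1/2 < u" "u \<le> real_of_int ?k + 1/2"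
    unfolding rnd_eq using ceiling_correct[of "u - 1/2"] by linarith+
  show ?thesis
  proof (cases "w \<ge> 0")
    case True
    have "u + w > real_of_int ?k + 1/2"
    proof (rule ccontr)
      assume "\<not> ?thesis"
      then have "rnd (u+w) = ?k" using k True
        by (intro rnd_unique) auto
      with assms show False by simp
    qed
    then show ?thesis using k True by (intro exI[of _ ?k]) auto
  next
    case False
    have "u + w \<le> real_of_int ?k - 1/2"
    proof (rule ccontr)
      assume "\<not> ?thesis"
      then have "rnd (u+w) = ?k" using k False
        by (intro rnd_unique) auto
      with assms show False by simp
    qed
    then show ?thesis using k False by (intro exI[of _ "?k - 1"]) auto
  qed
qed

lemma window_one:
  fixes \<theta> \<beta> c \<delta> :: real and m :: nat and z0 :: int
  assumes "\<beta> = \<theta> - z0" "\<beta> \<noteq> 0" "m * \<bar>\<beta>\<bar> \<le> 1" "\<delta> \<le> \<bar>\<beta>\<bar>/2"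
    and "s < m" "s' < m"
    and "\<bar>c + s * \<theta> - za - 1/2\<bar> < \<delta>" "\<bar>c + s' * \<theta> - zb - 1/2\<bar> < \<delta>"
    and "za \<in> \<int>" "zb \<in> \<int>"
  shows "s = s'"
proof -
  have e1: "c + s * \<theta> - za = c + s*\<beta> - (za - s*z0)" unfolding assms(1) by (simp add: algebra_simps)
  have e2: "c + s' * \<theta> - zb = c + s'*\<beta> - (zb - s'*z0)" unfolding assms(1) by (simp add: algebra_simps)
  define ya where "ya = za - s*z0"
  define yb where "yb = zb - s'*z0"
  have ya: "ya \<in> \<int>" "yb \<in> \<int>" using assms(9,10) unfolding ya_def yb_def by auto
  have ha: "\<bar>c + s*\<beta> - ya - 1/2\<bar> < \<delta>" using assms(7) e1 ya_def by simp
  have hb: "\<bar>c + s'*\<beta> - yb - 1/2\<bar> < \<delta>" using assms(8) e2 yb_def by simp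
  have "\<bar>real s - real s'\<bar> \<le> real m - 1" using assms(5,6) by linarith
  then have "\<bar>(real s - real s') * \<beta>\<bar> \<le> (real m - 1) * \<bar>\<beta>\<bar>"
    by (simp add: abs_mult mult_right_mono)
  also have "\<dots> \<le> 1 - \<bar>\<beta>\<bar>" using assms(3) by (simp add: algebra_simps)
  finally have d: "\<bar>(real s - real s') * \<beta>\<bar> \<le> 1 - \<bar>\<beta>\<bar>" .
  have d2: "\<bar>real s * \<beta> - real s' * \<beta>\<bar> \<le> 1 - \<bar>\<beta>\<bar>" using d by (simp add: left_diff_distrib)
  have "\<bar>ya - yb\<bar> < 1"
    using ha hb d2 assms(4) unfolding abs_less_iff abs_le_iff by linarith
  moreover obtain a b :: int where "ya = of_int a" "yb = of_int b" using ya by (auto elim!: Ints_cases)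
  ultimately have "ya = yb"
    by (metis of_int_abs of_int_diff of_int_less_1_iff zabs_less_one_iff eq_iff_diff_eq_0)
  then have "\<bar>(real s - real s') * \<beta>\<bar> < \<bar>\<beta>\<bar>"
    using ha hb assms(4) unfolding left_diff_distrib abs_less_iff by linarith
  then have "\<bar>real s - real s'\<bar> < 1" using assms(2) by (simp add: abs_mult)
  then show ?thesis by linarith
qed
lemma double_count:
  fixes T :: "(real ^ 'n) set" and d :: "real ^ 'n" and m :: nat
  assumes "finite T"
    and W: "\<And>k s s'. s < m \<Longrightarrow> s' < m \<Longrightarrow> k + real s *\<^sub>R d \<in> T \<Longrightarrow> k + real s' *\<^sub>R d \<in> T \<Longrightarrow> s = s'"
  shows "m * card T = card ((\<lambda>(t,s). t - real s *\<^sub>R d) ` (T \<times> {..<m}))"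
proof -
  have "inj_on (\<lambda>(t,s). t - real s *\<^sub>R d) (T \<times> {..<m})"
  proof (rule inj_onI, clarify)
    fix t s t' s' assume h: "t \<in> T" "s < m" "t' \<in> T" "s' < m"
      "t - real s *\<^sub>R d = t' - real s' *\<^sub>R d"
    let ?k = "t - real s *\<^sub>R d"
    have "?k + real s *\<^sub>R d \<in> T" "?k + real s' *\<^sub>R d \<in> T" using h by (auto simp: algebra_simps)
    then have "s = s'" using W h by blast
    then show "t = t' \<and> s = s'" using h by simp
  qed
  then show ?thesis
    by (simp add: card_image card_cartesian_product)
qed

lemma vec_in_PiE:
  assumes "\<forall>l. k $ l \<in> F l"
  shows "k \<in> vec_lambda ` (PiE UNIV F)"
proof
  show "k = vec_lambda (\<lambda>l. k $ l)" by simp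
  show "(\<lambda>l. k $ l) \<in> PiE UNIV F" using assms by auto
qed

lemma card_vec_PiE:
  assumes "\<And>l. finite (F l)"
  shows "card (vec_lambda ` (PiE (UNIV :: 'n::finite set) F)) = (\<Prod>l\<in>UNIV. card (F l))"
proof -
  have "inj_on vec_lambda (PiE (UNIV :: 'n set) F)"
    by (rule inj_onI) (simp add: vec_lambda_inject)
  then show ?thesis by (simp add: card_image card_PiE)
qed

lemma int_box_sub:
  "{k \<in> intvecs. \<forall>l. \<bar>k $ l - c $ l\<bar> \<le> r} \<subseteq>
     vec_lambda ` (PiE (UNIV :: 'n::finite set) (\<lambda>l. real_of_int ` {\<lceil>c$l - r\<rceil>..\<lfloor>c$l + r\<rfloor>}))"
proof
  fix k :: "real ^ 'n" assume "k \<in> {k \<in> intvecs. \<forall>l. \<bar>k $ l - c $ l\<bar> \<le> r}"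
  then have h: "\<forall>l. k $ l \<in> \<int>" "\<forall>l. \<bar>k $ l - c $ l\<bar> \<le> r" by (auto simp: intvecs_def)
  have "\<forall>l. k $ l \<in> real_of_int ` {\<lceil>c$l - r\<rceil>..\<lfloor>c$l + r\<rfloor>}"
  proof
    fix l
    obtain z where z: "k $ l = of_int z" using h(1) by (auto elim!: Ints_cases)
    have "\<lceil>c$l - r\<rceil> \<le> z" "z \<le> \<lfloor>c$l + r\<rfloor>" using h(2)[rule_format, of l] z
      by (auto simp: ceiling_le_iff le_floor_iff abs_le_iff)
    then show "k $ l \<in> real_of_int ` {\<lceil>c$l - r\<rceil>..\<lfloor>c$l + r\<rfloor>}" using z by auto
  qed
  then show "k \<in> vec_lambda ` (PiE UNIV (\<lambda>l. real_of_int ` {\<lceil>c$l - r\<rceil>..\<lfloor>c$l + r\<rfloor>}))"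
    by (rule vec_in_PiE)
qed

lemma int_box_finite: "finite {k \<in> intvecs. \<forall>l. \<bar>k $ l - c $ l\<bar> \<le> r}"
  by (rule finite_subset[OF int_box_sub]) (intro finite_imageI finite_PiE; auto)

lemma int_box_card:
  assumes "r \<ge> 0"
  shows "real (card {k \<in> intvecs. \<forall>l. \<bar>k $ l - (c::real^'n) $ l\<bar> \<le> r}) \<le> (2*r+1) ^ CARD('n)"
proof -
  have "card {k \<in> intvecs. \<forall>l. \<bar>k $ l - c $ l\<bar> \<le> r} \<le>
     card (vec_lambda ` (PiE (UNIV :: 'n set) (\<lambda>l. real_of_int ` {\<lceil>c$l - r\<rceil>..\<lfloor>c$l + r\<rfloor>})))"
    by (rule card_mono[OF _ int_box_sub]) (intro finite_imageI finite_PiE; auto)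
  also have "\<dots> = (\<Prod>l\<in>UNIV. card (real_of_int ` {\<lceil>c$l - r\<rceil>..\<lfloor>c$l + r\<rfloor>}))"
    by (rule card_vec_PiE) auto
  also have "\<dots> = (\<Prod>l\<in>UNIV. nat (\<lfloor>c$l + r\<rfloor> - \<lceil>c$l - r\<rceil> + 1))"
    by (simp add: card_image inj_on_def)
  finally have "real (card {k \<in> intvecs. \<forall>l. \<bar>k $ l - c $ l\<bar> \<le> r}) \<le>
      real (\<Prod>l\<in>UNIV. (nat (\<lfloor>c$l + r\<rfloor> - \<lceil>c$l - r\<rceil> + 1)))"
    by (simp only: of_nat_le_iff)
  also have "\<dots> = (\<Prod>l\<in>UNIV. real (nat (\<lfloor>c$l + r\<rfloor> - \<lceil>c$l - r\<rceil> + 1)))"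
    by (rule of_nat_prod)
  also have "\<dots> \<le> (\<Prod>l\<in>(UNIV::'n set). 2*r+1)"
  proof (rule prod_mono, safe)
    fix l
    have ab: "real_of_int \<lfloor>c$l + r\<rfloor> \<le> c$l + r" "c$l - r \<le> real_of_int \<lceil>c$l - r\<rceil>" by auto
    show "real (nat (\<lfloor>c$l + r\<rfloor> - \<lceil>c$l - r\<rceil> + 1)) \<le> 2*r+1"
    proof (cases "\<lfloor>c$l + r\<rfloor> - \<lceil>c$l - r\<rceil> + 1 \<ge> 0")
      case True
      then have "real (nat (\<lfloor>c$l + r\<rfloor> - \<lceil>c$l - r\<rceil> + 1)) = real_of_int \<lfloor>c$l + r\<rfloor> - real_of_int \<lceil>c$l - r\<rceil> + 1"
        by simp
      then show ?thesis using ab by linarith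
    next
      case False
      then show ?thesis using assms by simp
    qed
  qed auto
  finally show ?thesis by simp
qed

lemma int_ball_card:
  fixes x :: "real ^ 'n"
  assumes "R \<ge> 1"
  shows "real (card (supball x R \<inter> intvecs)) \<ge> (R/2) ^ CARD('n)"
proof -
  define F :: "'n \<Rightarrow> real set" where "F = (\<lambda>l. real_of_int ` {\<lfloor>x$l - R\<rfloor>+1 .. \<lfloor>x$l - R\<rfloor> + \<lfloor>R\<rfloor>})"
  have sub: "vec_lambda ` (PiE (UNIV :: 'n set) F) \<subseteq> supball x R \<inter> intvecs"
  proof
    fix y assume "y \<in> vec_lambda ` (PiE (UNIV :: 'n set) F)"
    then obtain f where f: "f \<in> PiE (UNIV :: 'n set) F" and y: "y = vec_lambda f" by auto
    have "\<forall>l. f l \<in> F l" using f by auto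
    then have h: "\<forall>l. f l \<in> \<int> \<and> \<bar>x$l - f l\<bar> < R"
    proof (intro allI)
      fix l assume "\<forall>l. f l \<in> F l"
      then have "f l \<in> real_of_int ` {\<lfloor>x $ l - R\<rfloor> + 1..\<lfloor>x $ l - R\<rfloor> + \<lfloor>R\<rfloor>}"
        unfolding F_def by blast
      then obtain z where z: "f l = of_int z" "\<lfloor>x$l - R\<rfloor>+1 \<le> z" "z \<le> \<lfloor>x$l - R\<rfloor> + \<lfloor>R\<rfloor>"
        by auto
      have a: "x$l - R < real_of_int (\<lfloor>x$l - R\<rfloor>+1)" "real_of_int \<lfloor>x$l - R\<rfloor> \<le> x$l - R"
        "real_of_int \<lfloor>R\<rfloor> \<le> R" by linarith+
      have zz: "real_of_int (\<lfloor>x$l - R\<rfloor>+1) \<le> of_int z" "real_of_int z \<le> of_int (\<lfloor>x$l - R\<rfloor> + \<lfloor>R\<rfloor>)"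
        using z(2,3) by (simp_all only: of_int_le_iff)
      have "\<bar>x$l - f l\<bar> < R" unfolding z(1) abs_less_iff using a zz assms
        unfolding of_int_add by linarith
      then show "f l \<in> \<int> \<and> \<bar>x$l - f l\<bar> < R" using z(1) by simp
    qed
    then show "y \<in> supball x R \<inter> intvecs"
      by (auto simp: supball_def intvecs_def y)
  qed
  have fin: "finite (supball x R \<inter> intvecs)"
  proof (rule finite_subset[OF _ int_box_finite[of x R]])
    show "supball x R \<inter> intvecs \<subseteq> {k \<in> intvecs. \<forall>l. \<bar>k $ l - x $ l\<bar> \<le> R}"
      by (auto simp: supball_def abs_minus_commute less_imp_le)
  qed
  have "(\<Prod>l\<in>(UNIV::'n set). R/2) \<le> (\<Prod>l\<in>UNIV. real (card (F l)))"
  proof (rule prod_mono, safe)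
    fix l
    have "card (F l) = nat \<lfloor>R\<rfloor>" unfolding F_def by (simp add: card_image inj_on_def)
    moreover have "R/2 \<le> of_int \<lfloor>R\<rfloor>"
    proof -
      have "1 \<le> \<lfloor>R\<rfloor>" using assms by (simp add: le_floor_iff)
      then have "(1::real) \<le> of_int \<lfloor>R\<rfloor>" by linarith
      moreover have "R - 1 < of_int \<lfloor>R\<rfloor>" by linarith
      ultimately show ?thesis by linarith
    qed
    ultimately show "R/2 \<le> real (card (F l))" using assms by simp
  qed (use assms in auto)
  also have "\<dots> = real (card (vec_lambda ` (PiE (UNIV :: 'n set) F)))"
    by (subst card_vec_PiE) (auto simp: F_def)
  also have "\<dots> \<le> real (card (supball x R \<inter> intvecs))"
    using card_mono[OF fin sub] by simp
  finally show ?thesis by simp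
qed


lemma mv_component_bound:
  fixes B :: "real ^ 'n ^ 'n"
  assumes "\<forall>j. \<bar>v $ j\<bar> \<le> \<rho>"
  shows "\<bar>(B *v v) $ l\<bar> \<le> (\<Sum>i\<in>UNIV. \<Sum>j\<in>UNIV. \<bar>B$i$j\<bar>) * \<rho>"
proof -
  have "\<bar>(B *v v) $ l\<bar> = \<bar>\<Sum>j\<in>UNIV. B$l$j * v$j\<bar>" by (simp add: matrix_vector_mult_def)
  also have "\<dots> \<le> (\<Sum>j\<in>UNIV. \<bar>B$l$j\<bar> * \<rho>)"
    by (rule order_trans[OF sum_abs sum_mono]) (simp add: abs_mult assms mult_left_mono)
  also have "\<dots> = (\<Sum>j\<in>UNIV. \<bar>B$l$j\<bar>) * \<rho>" by (simp add: sum_distrib_right)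
  also have "\<dots> \<le> (\<Sum>i\<in>UNIV. \<Sum>j\<in>UNIV. \<bar>B$i$j\<bar>) * \<rho>"
  proof (rule mult_right_mono)
    show "(\<Sum>j\<in>UNIV. \<bar>B$l$j\<bar>) \<le> (\<Sum>i\<in>UNIV. \<Sum>j\<in>UNIV. \<bar>B$i$j\<bar>)"
      by (rule member_le_sum) (auto intro: sum_nonneg)
    have "0 \<le> \<bar>v $ l\<bar>" by simp
    then show "0 \<le> \<rho>" using assms by (meson order_trans)
  qed
  finally show ?thesis .
qed

lemma lattice_count:
  fixes A :: "real ^ 'n ^ 'n"
  assumes "invertible A"
  shows "\<exists>K>0. \<forall>x \<rho>. \<rho> \<ge> 1 \<longrightarrow> finite {k \<in> intvecs. A *v k \<in> supball x \<rho>} \<and>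
            real (card {k \<in> intvecs. A *v k \<in> supball x \<rho>}) \<le> (K * \<rho>) ^ CARD('n)"
proof -
  obtain B :: "real ^ 'n ^ 'n" where B: "B ** A = mat 1" using assms unfolding invertible_def by blast
  define K0 where "K0 = (\<Sum>i\<in>UNIV. \<Sum>j\<in>UNIV. \<bar>B$i$j\<bar>)"
  have K0: "K0 \<ge> 0" unfolding K0_def by (auto intro: sum_nonneg)
  show ?thesis
  proof (intro exI[of _ "2*K0+1"] conjI allI impI)
    show "0 < 2*K0+1" using K0 by simp
    fix x :: "real ^ 'n" and \<rho> :: real assume r: "\<rho> \<ge> 1"
    have sub: "{k \<in> intvecs. A *v k \<in> supball x \<rho>} \<subseteq> {k \<in> intvecs. \<forall>l. \<bar>k $ l - (B *v x) $ l\<bar> \<le> K0 * \<rho>}"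
    proof
      fix k assume "k \<in> {k \<in> intvecs. A *v k \<in> supball x \<rho>}"
      then have k: "k \<in> intvecs" "A *v k \<in> supball x \<rho>" by auto
      have kk: "k = B *v (A *v k)" using B by (simp add: matrix_vector_mul_assoc)
      have "k - B *v x = B *v (A *v k - x)" using kk by (metis matrix_vector_mult_diff_distrib)
      moreover have "\<forall>j. \<bar>(A *v k - x) $ j\<bar> \<le> \<rho>" using k(2) by (auto simp: supball_def abs_minus_commute less_imp_le)
      ultimately have "\<forall>l. \<bar>(k - B *v x) $ l\<bar> \<le> K0 * \<rho>"
        using mv_component_bound[of "A *v k - x" \<rho> B] unfolding K0_def by simp
      then show "k \<in> {k \<in> intvecs. \<forall>l. \<bar>k $ l - (B *v x) $ l\<bar> \<le> K0 * \<rho>}" using k by simp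
    qed
    show "finite {k \<in> intvecs. A *v k \<in> supball x \<rho>}"
      by (rule finite_subset[OF sub int_box_finite])
    have "real (card {k \<in> intvecs. A *v k \<in> supball x \<rho>}) \<le> real (card {k \<in> intvecs. \<forall>l. \<bar>k $ l - (B *v x) $ l\<bar> \<le> K0 * \<rho>})"
      using card_mono[OF int_box_finite sub] by simp
    also have "\<dots> \<le> (2 * (K0*\<rho>) + 1) ^ CARD('n)"
      by (rule int_box_card) (use K0 r in simp)
    also have "\<dots> \<le> ((2*K0+1) * \<rho>) ^ CARD('n)"
      by (rule power_mono) (use K0 r in \<open>auto simp: algebra_simps\<close>)
    finally show "real (card {k \<in> intvecs. A *v k \<in> supball x \<rho>}) \<le> ((2*K0+1) * \<rho>) ^ CARD('n)" .
  qed
qed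

lemma rndvec_close: "\<bar>rndvec u $ l - u $ l\<bar> \<le> 1/2"
  using rnd_close[of "u $ l"] by (simp add: rndvec_def)

lemma diff_index:
  assumes "rndvec u \<noteq> rndvec (u + w)"
  shows "\<exists>i. rnd (u$i) \<noteq> rnd (u$i + w$i)"
  using assms by (auto simp: rndvec_def vec_eq_iff)


lemma mv_axis: "(A *v (c *\<^sub>R axis j (1::real))) $ i = c * A$i$j"
  by (simp add: matrix_vector_mult_def axis_def if_distrib cong: if_cong)

lemma row_approx:
  fixes A :: "real ^ 'n ^ 'n" and N :: nat
  assumes "i \<notin> rat_rows A" "N > 0"
  shows "\<exists>d z0. d \<in> intvecs \<and> (A *v d)$i - of_int z0 \<noteq> 0 \<and> \<bar>(A *v d)$i - of_int z0\<bar> < 1/N"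
proof -
  obtain j where j: "A$i$j \<notin> \<rat>" using assms(1) unfolding rat_rows_def by auto
  obtain h k where hk: "0 < k" "\<bar>of_int k * A$i$j - of_int h\<bar> < 1/N"
    using Dirichlet_approx[OF assms(2), of "A$i$j"] by blast
  define d where "d = of_int k *\<^sub>R axis j (1::real)"
  have dA: "(A *v d)$i = of_int k * A$i$j" unfolding d_def by (rule mv_axis)
  have dint: "d \<in> intvecs" unfolding d_def intvecs_def by (auto simp: axis_def)
  have "of_int k * A$i$j - of_int h \<noteq> 0"
  proof
    assume "of_int k * A$i$j - of_int h = 0"
    then have "A$i$j = of_int h / of_int k" using hk(1) by (simp add: field_simps)
    then have "A$i$j \<in> \<rat>" by simp
    with j show False by simp
  qed
  then show ?thesis using dint dA hk(2) by (intro exI[of _ d] exI[of _ h]) simp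
qed


lemma row_count:
  fixes A :: "real ^ 'n ^ 'n" and x d :: "real ^ 'n" and m :: nat and z0 :: int and Md \<beta> \<delta> R :: real
  assumes dint: "d \<in> intvecs" and \<beta>: "\<beta> = (A *v d)$i - of_int z0" "\<beta> \<noteq> 0" "m * \<bar>\<beta>\<bar> \<le> 1" "\<delta> \<le> \<bar>\<beta>\<bar>/2"
    and Mdb: "\<forall>l. \<bar>(A *v d)$l\<bar> \<le> Md"
    and S: "finite {k \<in> intvecs. A *v k \<in> supball x (R + 1 + m * Md)}"
  shows "finite {k \<in> intvecs. A *v k \<in> supball x (R+1) \<and> (\<exists>z::int. \<bar>(A *v k)$i - z - 1/2\<bar> < \<delta>)} \<and>
     m * card {k \<in> intvecs. A *v k \<in> supball x (R+1) \<and> (\<exists>z::int. \<bar>(A *v k)$i - z - 1/2\<bar> < \<delta>)}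
       \<le> card {k \<in> intvecs. A *v k \<in> supball x (R + 1 + m * Md)}"
proof -
  define T where "T = {k \<in> intvecs. A *v k \<in> supball x (R+1) \<and> (\<exists>z::int. \<bar>(A *v k)$i - z - 1/2\<bar> < \<delta>)}"
  define S where "S = {k \<in> intvecs. A *v k \<in> supball x (R + 1 + m * Md)}"
  have Md0: "Md \<ge> 0" using Mdb by (meson abs_ge_zero order_trans)
  have TS: "T \<subseteq> S"
  proof
    fix k assume "k \<in> T"
    then show "k \<in> S" unfolding T_def S_def supball_def using Md0
      by (auto intro: less_le_trans[OF _ _] simp: )
  qed
  have finT: "finite T" using finite_subset[OF TS] S unfolding S_def by blast
  have lin: "(A *v (k + real s *\<^sub>R d))$i = (A *v k)$i + real s * (A *v d)$i" for k s
    by (simp add: matrix_vector_right_distrib matrix_vector_mult_scaleR)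
  have W: "s = s'" if hs: "s < m" "s' < m" "k + real s *\<^sub>R d \<in> T" "k + real s' *\<^sub>R d \<in> T" for k s s'
  proof -
    obtain za :: int where za: "\<bar>(A *v (k + real s *\<^sub>R d))$i - za - 1/2\<bar> < \<delta>" using hs(3) unfolding T_def by auto
    obtain zb :: int where zb: "\<bar>(A *v (k + real s' *\<^sub>R d))$i - zb - 1/2\<bar> < \<delta>" using hs(4) unfolding T_def by auto
    show ?thesis
      by (rule window_one[OF \<beta>(1) \<beta>(2-4) hs(1,2), of "(A *v k)$i" "of_int za" "of_int zb"])
         (use za zb lin in auto)
  qed
  have eq: "m * card T = card ((\<lambda>(t,s). t - real s *\<^sub>R d) ` (T \<times> {..<m}))"
    by (rule double_count[OF finT W]) auto
  have ES: "(\<lambda>(t,s). t - real s *\<^sub>R d) ` (T \<times> {..<m}) \<subseteq> S"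
  proof clarify
    fix t s assume ts: "t \<in> T" "s < m"
    have tint: "t \<in> intvecs" and tb: "\<forall>l. \<bar>x$l - (A *v t)$l\<bar> < R + 1" using ts unfolding T_def supball_def by auto
    have "t - real s *\<^sub>R d \<in> intvecs" using tint dint unfolding intvecs_def by auto
    moreover have "\<bar>x$l - (A *v (t - real s *\<^sub>R d))$l\<bar> < R + 1 + m * Md" for l
    proof -
      have e: "(A *v (t - real s *\<^sub>R d))$l = (A *v t)$l - real s * (A *v d)$l"
        by (simp add: matrix_vector_mult_diff_distrib matrix_vector_mult_scaleR)
      have "\<bar>real s * (A *v d)$l\<bar> \<le> real m * Md"
        unfolding abs_mult using ts(2) Mdb Md0 by (intro mult_mono) auto
      then show ?thesis unfolding e using tb[rule_format, of l] by linarith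
    qed
    ultimately show "t - real s *\<^sub>R d \<in> S" unfolding S_def supball_def by auto
  qed
  have "card ((\<lambda>(t,s). t - real s *\<^sub>R d) ` (T \<times> {..<m})) \<le> card S"
    by (rule card_mono[OF _ ES]) (use S in \<open>simp add: S_def\<close>)
  then show ?thesis using finT eq unfolding T_def S_def by simp
qed

theorem lemmaB4:
  fixes A :: "real ^ 'n ^ 'n" and \<epsilon> :: real
  assumes "\<epsilon> > 0" and "invertible A"
  shows "\<exists>\<delta>>0. \<exists>R0>0. \<forall>w :: real ^ 'n.
           (\<forall>i. \<bar>w $ i\<bar> < \<delta>) \<and> (\<forall>i\<in>rat_rows A. w $ i = 0) \<longrightarrow>
           (\<forall>R. R \<ge> R0 \<and> R \<ge> 1 \<longrightarrow>
              upper_dens R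
                ((rndvec ` lattice A - rndvec ` ((\<lambda>v. v + w) ` lattice A)) \<union>
                 (rndvec ` ((\<lambda>v. v + w) ` lattice A) - rndvec ` lattice A)) \<le> \<epsilon>)"
proof -
  obtain K where K: "K > 0" and cnt: "\<And>x \<rho>. \<rho> \<ge> 1 \<Longrightarrow> finite {k \<in> intvecs. A *v k \<in> supball x \<rho>} \<and>
            real (card {k \<in> intvecs. A *v k \<in> supball x \<rho>}) \<le> (K * \<rho>) ^ CARD('n)"
    using lattice_count[OF assms(2)] by blast
  define n where "n = CARD('n)"
  define Irr where "Irr = - rat_rows A"
  define N :: nat where "N = nat \<lceil>2 * real n * (4*K)^n / \<epsilon>\<rceil> + 1"
  have N0: "N > 0" unfolding N_def by simp
  have N1: "2 * real n * (4*K)^n / \<epsilon> \<le> real N" unfolding N_def by linarith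
  have "\<forall>i\<in>Irr. \<exists>p. fst p \<in> intvecs \<and> (A *v fst p)$i - of_int (snd p) \<noteq> 0 \<and> \<bar>(A *v fst p)$i - of_int (snd p)\<bar> < 1/N"
  proof
    fix i assume "i \<in> Irr"
    then have "i \<notin> rat_rows A" unfolding Irr_def by simp
    from row_approx[OF this N0] obtain d z0 where
      "d \<in> intvecs \<and> (A *v d)$i - of_int z0 \<noteq> 0 \<and> \<bar>(A *v d)$i - of_int z0\<bar> < 1/N" by blast
    then show "\<exists>p. fst p \<in> intvecs \<and> (A *v fst p)$i - of_int (snd p) \<noteq> 0 \<and> \<bar>(A *v fst p)$i - of_int (snd p)\<bar> < 1/N"
      by (intro exI[of _ "(d, z0)"]) simp
  qed
  then obtain P where P: "\<forall>i\<in>Irr. fst (P i) \<in> intvecs \<and> (A *v fst (P i))$i - of_int (snd (P i)) \<noteq> 0 \<and>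
      \<bar>(A *v fst (P i))$i - of_int (snd (P i))\<bar> < 1/N"
    by (rule bchoice[elim_format]) blast
  define dd where "dd i = fst (P i)" for i
  define zz where "zz i = snd (P i)" for i
  define \<beta> where "\<beta> i = (A *v dd i)$i - of_int (zz i)" for i
  define m where "m i = nat \<lfloor>1/\<bar>\<beta> i\<bar>\<rfloor>" for i
  define Md where "Md i = (\<Sum>l\<in>UNIV. \<bar>(A *v dd i)$l\<bar>)" for i
  have Md0: "Md i \<ge> 0" for i unfolding Md_def by (auto intro: sum_nonneg)
  have Mdb: "\<forall>l. \<bar>(A *v dd i)$l\<bar> \<le> Md i" for i unfolding Md_def by (auto intro: member_le_sum)
  have mprops: "\<beta> i \<noteq> 0 \<and> real (m i) * \<bar>\<beta> i\<bar> \<le> 1 \<and> N \<le> m i \<and> dd i \<in> intvecs" if "i \<in> Irr" for i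
  proof -
    have b: "\<beta> i \<noteq> 0" "\<bar>\<beta> i\<bar> < 1/N" "dd i \<in> intvecs" using P that unfolding \<beta>_def dd_def zz_def by auto
    have pos: "\<bar>\<beta> i\<bar> > 0" using b by simp
    have "real N < 1/\<bar>\<beta> i\<bar>" using b(2) pos N0 by (simp add: field_simps)
    then have "int N \<le> \<lfloor>1/\<bar>\<beta> i\<bar>\<rfloor>" by (simp add: le_floor_iff)
    then have mN: "N \<le> m i" unfolding m_def by simp
    have fl: "real (m i) \<le> 1/\<bar>\<beta> i\<bar>"
    proof -
      have "0 \<le> \<lfloor>1/\<bar>\<beta> i\<bar>\<rfloor>" using pos by simp
      then have "real (m i) = of_int \<lfloor>1/\<bar>\<beta> i\<bar>\<rfloor>" unfolding m_def by simp
      also have "\<dots> \<le> 1/\<bar>\<beta> i\<bar>" by simp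
      finally show ?thesis .
    qed
    have "real (m i) * \<bar>\<beta> i\<bar> \<le> 1/\<bar>\<beta> i\<bar> * \<bar>\<beta> i\<bar>" by (rule mult_right_mono[OF fl]) simp
    also have "\<dots> = 1" using pos by simp
    finally show ?thesis using b mN by simp
  qed
  define \<delta> where "\<delta> = Min (insert (1/2) ((\<lambda>i. \<bar>\<beta> i\<bar>/2) ` Irr))"
  have finIrr: "finite Irr" by simp
  have \<delta>pos: "\<delta> > 0" unfolding \<delta>_def using mprops finIrr by (auto simp: Min_gr_iff)
  have \<delta>half: "\<delta> \<le> 1/2" unfolding \<delta>_def by (rule Min_le) (use finIrr in auto)
  have \<delta>b: "\<delta> \<le> \<bar>\<beta> i\<bar>/2" if "i \<in> Irr" for i unfolding \<delta>_def by (rule Min_le) (use finIrr that in auto)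
  define R0 where "R0 = 1 + (\<Sum>i\<in>UNIV. real (m i) * Md i)"
  have R0b: "1 + real (m i) * Md i \<le> R0" for i
    unfolding R0_def using Md0 by (auto intro!: member_le_sum mult_nonneg_nonneg)
  have R0pos: "R0 > 0" using R0b[of undefined] Md0[of undefined] by (smt (verit) mult_nonneg_nonneg of_nat_0_le_iff)
  show ?thesis
  proof (rule exI[of _ \<delta>], intro conjI)
    show "\<delta> > 0" by (rule \<delta>pos)
    show "\<exists>R0>0. \<forall>w :: real ^ 'n.
           (\<forall>i. \<bar>w $ i\<bar> < \<delta>) \<and> (\<forall>i\<in>rat_rows A. w $ i = 0) \<longrightarrow>
           (\<forall>R. R \<ge> R0 \<and> R \<ge> 1 \<longrightarrow>
              upper_dens R
                ((rndvec ` lattice A - rndvec ` ((\<lambda>v. v + w) ` lattice A)) \<union>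
                 (rndvec ` ((\<lambda>v. v + w) ` lattice A) - rndvec ` lattice A)) \<le> \<epsilon>)"
    proof (rule exI[of _ R0], intro conjI allI impI)
      show "R0 > 0" by (rule R0pos)
      fix w :: "real ^ 'n" and R :: real
      assume hw: "(\<forall>i. \<bar>w $ i\<bar> < \<delta>) \<and> (\<forall>i\<in>rat_rows A. w $ i = 0)"
        and hR: "R0 \<le> R \<and> 1 \<le> R"
      define \<Gamma> where "\<Gamma> = ((rndvec ` lattice A - rndvec ` ((\<lambda>v. v + w) ` lattice A)) \<union>
                 (rndvec ` ((\<lambda>v. v + w) ` lattice A) - rndvec ` lattice A))"
      have key: "real (card (supball x R \<inter> \<Gamma>)) / real (card (supball x R \<inter> intvecs)) \<le> \<epsilon>" for x
      proof -
        define T where "T i = {k \<in> intvecs. A *v k \<in> supball x (R+1) \<and> (\<exists>z::int. \<bar>(A *v k)$i - z - 1/2\<bar> < \<delta>)}" for i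
        define G where "G = (\<Union>i\<in>Irr. T i)"
        define X where "X = (2*K*R) ^ n"
        have X0: "X \<ge> 0" unfolding X_def using K hR by simp
        have Tb: "finite (T i) \<and> real (card (T i)) \<le> X / N" if iI: "i \<in> Irr" for i
        proof -
          have mp: "\<beta> i \<noteq> 0" "real (m i) * \<bar>\<beta> i\<bar> \<le> 1" "N \<le> m i" "dd i \<in> intvecs" using mprops[OF iI] by auto
          define \<rho> where "\<rho> = R + 1 + real (m i) * Md i"
          have \<rho>1: "\<rho> \<ge> 1" "\<rho> \<le> 2*R" using R0b[of i] hR Md0[of i] unfolding \<rho>_def
            by (auto simp: mult_nonneg_nonneg)
          have cS: "finite {k \<in> intvecs. A *v k \<in> supball x \<rho>}"
               "real (card {k \<in> intvecs. A *v k \<in> supball x \<rho>}) \<le> (K * \<rho>) ^ CARD('n)"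
            using cnt[OF \<rho>1(1)] by auto
          have rc: "finite (T i) \<and> m i * card (T i) \<le> card {k \<in> intvecs. A *v k \<in> supball x \<rho>}"
            using row_count[OF mp(4) \<beta>_def mp(1,2) \<delta>b[OF iI] Mdb[of i], of x R] cS(1)
            unfolding T_def \<rho>_def by simp
          have "(K * \<rho>) ^ CARD('n) \<le> X" unfolding X_def n_def
            by (rule power_mono) (use K \<rho>1 in auto)
          then have "real (m i) * real (card (T i)) \<le> X"
            using rc cS(2) by (metis (mono_tags, lifting) of_nat_le_iff of_nat_mult order_trans)
          moreover have "real N \<le> real (m i)" using mp(3) by simp
          ultimately have "real N * real (card (T i)) \<le> X"
            by (meson mult_right_mono of_nat_0_le_iff order_trans)
          then have "real (card (T i)) \<le> X / N" using N0 by (simp add: field_simps)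
          then show ?thesis using rc by simp
        qed
        have finG: "finite G" unfolding G_def using Tb finIrr by auto
        have "card G \<le> (\<Sum>i\<in>Irr. card (T i))" unfolding G_def by (rule card_UN_le[OF finIrr])
        then have "real (card G) \<le> (\<Sum>i\<in>Irr. real (card (T i)))"
          by (metis of_nat_le_iff of_nat_sum)
        also have "\<dots> \<le> (\<Sum>i\<in>Irr. X / N)" by (rule sum_mono) (use Tb in auto)
        also have "\<dots> = real (card Irr) * (X / N)" by simp
        also have "\<dots> \<le> real n * (X / N)"
        proof (rule mult_right_mono)
          show "real (card Irr) \<le> real n" unfolding n_def by (simp add: card_mono)
          show "0 \<le> X / N" using X0 by simp
        qed
        finally have cG: "real (card G) \<le> real n * (X / N)" .
        have cover: "supball x R \<inter> \<Gamma> \<subseteq> (\<lambda>k. rndvec (A *v k)) ` G \<union> (\<lambda>k. rndvec (A *v k + w)) ` G"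
        proof
          fix y assume y: "y \<in> supball x R \<inter> \<Gamma>"
          have yb: "\<bar>x$l - y$l\<bar> < R" for l using y unfolding supball_def by auto
          have bnd: "k \<in> G" if hk: "k \<in> intvecs" "rndvec (A *v k) \<noteq> rndvec (A *v k + w)"
             "\<forall>l. \<bar>x$l - (A *v k)$l\<bar> < R + 1" for k
          proof -
            obtain i where i: "rnd ((A *v k)$i) \<noteq> rnd ((A *v k)$i + w$i)" using diff_index[OF hk(2)] by auto
            have "w$i \<noteq> 0" using i by auto
            then have iI: "i \<in> Irr" using hw unfolding Irr_def by auto
            obtain z :: int where z: "\<bar>(A *v k)$i - z - 1/2\<bar> \<le> \<bar>w$i\<bar>" using rnd_boundary[OF i] by auto
            have "\<bar>(A *v k)$i - z - 1/2\<bar> < \<delta>" using z hw by (meson order_le_less_trans)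
            then have "k \<in> T i" unfolding T_def supball_def using hk by auto
            then show "k \<in> G" unfolding G_def using iI by auto
          qed
          from y have "y \<in> \<Gamma>" by simp
          then consider (a) "y \<in> rndvec ` lattice A" "y \<notin> rndvec ` ((\<lambda>v. v + w) ` lattice A)"
            | (b) "y \<in> rndvec ` ((\<lambda>v. v + w) ` lattice A)" "y \<notin> rndvec ` lattice A"
            unfolding \<Gamma>_def by blast
          then show "y \<in> (\<lambda>k. rndvec (A *v k)) ` G \<union> (\<lambda>k. rndvec (A *v k + w)) ` G"
          proof cases
            case a
            then obtain k where k: "k \<in> intvecs" "y = rndvec (A *v k)" unfolding lattice_def by auto
            have "A *v k + w \<in> (\<lambda>v. v + w) ` lattice A" using k(1) unfolding lattice_def by auto
            then have ne: "rndvec (A *v k) \<noteq> rndvec (A *v k + w)" using a(2) k(2) by auto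
            have "\<bar>x$l - (A *v k)$l\<bar> < R + 1" for l
              using yb[of l, unfolded k(2)] rndvec_close[of "A *v k" l] unfolding abs_le_iff abs_less_iff by linarith
            then have "k \<in> G" using bnd k(1) ne by blast
            then show ?thesis using k(2) by blast
          next
            case b
            then obtain k where k: "k \<in> intvecs" "y = rndvec (A *v k + w)" unfolding lattice_def by auto
            have "A *v k \<in> lattice A" using k(1) unfolding lattice_def by auto
            then have ne: "rndvec (A *v k) \<noteq> rndvec (A *v k + w)" using b(2) k(2) by (metis image_eqI)
            have "\<bar>x$l - (A *v k)$l\<bar> < R + 1" for l
            proof -
              have "\<bar>w$l\<bar> < \<delta>" using hw by auto
              then show ?thesis
                using yb[of l, unfolded k(2)] rndvec_close[of "A *v k + w" l] \<delta>half
                unfolding abs_le_iff abs_less_iff vector_add_component by linarith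
            qed
            then have "k \<in> G" using bnd k(1) ne by blast
            then show ?thesis using k(2) by blast
          qed
        qed
        have "card (supball x R \<inter> \<Gamma>) \<le> card ((\<lambda>k. rndvec (A *v k)) ` G \<union> (\<lambda>k. rndvec (A *v k + w)) ` G)"
          by (rule card_mono[OF _ cover]) (use finG in auto)
        also have "\<dots> \<le> card ((\<lambda>k. rndvec (A *v k)) ` G) + card ((\<lambda>k. rndvec (A *v k + w)) ` G)"
          by (rule card_Un_le)
        also have "\<dots> \<le> card G + card G" by (intro add_mono card_image_le finG)
        finally have num: "real (card (supball x R \<inter> \<Gamma>)) \<le> 2 * (real n * (X / N))"
          using cG by linarith
        have den: "real (card (supball x R \<inter> intvecs)) \<ge> (R/2) ^ n" unfolding n_def
          by (rule int_ball_card) (use hR in simp)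
        have dpos: "(R/2) ^ n > 0" using hR by simp
        have "real (card (supball x R \<inter> \<Gamma>)) / real (card (supball x R \<inter> intvecs))
              \<le> (2 * (real n * (X / N))) / (R/2) ^ n"
          by (rule frac_le) (use num den dpos in auto)
        also have "\<dots> = 2 * real n * (X / (R/2)^n) / N" by (simp add: field_simps)
        also have "X / (R/2)^n = (4*K)^n"
        proof -
          have "X / (R/2)^n = (2*K*R / (R/2))^n" unfolding X_def by (rule power_divide[symmetric])
          also have "2*K*R / (R/2) = 4*K" using hR by (simp add: field_simps)
          finally show ?thesis .
        qed
        also have "2 * real n * (4*K)^n / N \<le> \<epsilon>"
          using N1 N0 assms(1) by (simp add: field_simps)
        finally show ?thesis .
      qed
      have "upper_dens R \<Gamma> \<le> \<epsilon>" unfolding upper_dens_def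
        by (rule cSUP_least) (use key in auto)
      then show "upper_dens R
                ((rndvec ` lattice A - rndvec ` ((\<lambda>v. v + w) ` lattice A)) \<union>
                 (rndvec ` ((\<lambda>v. v + w) ` lattice A) - rndvec ` lattice A)) \<le> \<epsilon>"
        unfolding \<Gamma>_def .
    qed
  qed
qed

end
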